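(* Assume (A1)–(A3). If $m_1<0$, then for every $\theta>0$ there exist $C>0$ and $\delta>0$ such that for all $(i,j)\in\mathbb N\times\mathbb Z$, $k\in\mathbb N$ and $n\in\mathbb N$, \[\mathbb P_{(i,j)}(T_1^k\ge n)\le C\exp(\theta i-\delta n),\] where $T_1^k=\inf\{n>0: X_1(n)\le\max(k_0-1,k)\}$.
   Context: Let $\mathbb N=\{0,1,2,\dots\}$ and fix an integer $k_0\ge1$. Let $\mu$, $\mu'_j$ ($0\le j<k_0$), $\mu''_i$ ($0\le i<k_0$), $\mu_{ij}$ ($0\le i,j<k_0$) be probability measures on $\mathbb Z^2$. The random walk $Z=(X(n),Y(n))$ on $\mathbb N^2$ has transition probabilities $p((i,j)\to(i',j'))$ equal to $\mu(i'-i,j'-j)$ if $i,j\ge k_0$; $\mu'_j(i'-i,j'-j)$ if $i\ge k_0$, $0\le j<k_0$; $\mu''_i(i'-i,j'-j)$ if $0\le i<k_0$, $j\ge k_0$; $\mu_{ij}(i'-i,j'-j)$ if $0\le i,j<k_0$. Assumptions: (A1) $\mu(a,b)=0$ if $a<-k_0$ or $b<-k_0$; $\mu'_j(a,b)=0$ if $a<-k_0$ or $b<-j$; $\mu''_i(a,b)=0$ if $b<-k_0$ or $a<-i$; $\mu_{ij}(a,b)=0$ if $a<-i$ or $b<-j$. (A2) There are $\delta,\gamma,C>0$ with $\sup_{(i,j)\in\mathbb N^2}\mathbb E_{(i,j)}[\exp(\delta(X(1)-i)+\gamma(Y(1)-j))]\le C$. (A3) $Z_0,Z_1,Z_2,Z$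 are irreducible on their state spaces. $Z_0$: random walk on $\mathbb Z^2$ with increment law $\mu$; $m_1=\sum a\mu(a,b)$. $Z_1=(X_1,Y_1)$: Markov chain on $\mathbb N\times\mathbb Z$ with transitions $\mu(i'-i,j'-j)$ from $(i,j)$ if $i\ge k_0$ and $\mu''_i(i'-i,j'-j)$ if $0\le i<k_0$; $\mathbb P_{(i,j)}$ is its law from $(i,j)$. $Z_2$: Markov chain on $\mathbb Z\times\mathbb N$ with transitions $\mu$ if $j\ge k_0$ and $\mu'_j$ if $0\le j<k_0$. *)

theory Defs
  imports "HOL-Probability.Probability"
begin

type_synonym state = "int \<times> int"

definition shift_pmf :: "state \<Rightarrow> (int \<times> int) pmf \<Rightarrow> state pmf" where
  "shift_pmf x p = map_pmf (\<lambda>(a, b). (fst x + a, snd x + b)) p"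

definition stepZ :: "nat \<Rightarrow> (int \<times> int) pmf \<Rightarrow> (nat \<Rightarrow> (int \<times> int) pmf) \<Rightarrow>
    (nat \<Rightarrow> (int \<times> int) pmf) \<Rightarrow> (nat \<Rightarrow> nat \<Rightarrow> (int \<times> int) pmf) \<Rightarrow> state \<Rightarrow> state pmf" where
  "stepZ k0 mu mu' mu'' mu2 x = shift_pmf x
     (if int k0 \<le> fst x \<and> int k0 \<le> snd x then mu
      else if int k0 \<le> fst x then mu' (nat (snd x))
      else if int k0 \<le> snd x then mu'' (nat (fst x))
      else mu2 (nat (fst x)) (nat (snd x)))"

definition stepZ0 :: "(int \<times> int) pmf \<Rightarrow> state \<Rightarrow> state pmf" where
  "stepZ0 mu x = shift_pmf x mu"

definition stepZ1 :: "nat \<Rightarrow> (int \<times> int) pmf \<Rightarrow> (nat \<Rightarrow> (int \<times> int) pmf) \<Rightarrow> state \<Rightarrow> state pmf" where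
  "stepZ1 k0 mu mu'' x = shift_pmf x (if int k0 \<le> fst x then mu else mu'' (nat (fst x)))"

definition stepZ2 :: "nat \<Rightarrow> (int \<times> int) pmf \<Rightarrow> (nat \<Rightarrow> (int \<times> int) pmf) \<Rightarrow> state \<Rightarrow> state pmf" where
  "stepZ2 k0 mu mu' x = shift_pmf x (if int k0 \<le> snd x then mu else mu' (nat (snd x)))"

definition irreducible_on :: "'s set \<Rightarrow> ('s \<Rightarrow> 's pmf) \<Rightarrow> bool" where
  "irreducible_on S P \<longleftrightarrow>
     (\<forall>x\<in>S. \<forall>y\<in>S. (x, y) \<in> {(u, v). u \<in> S \<and> v \<in> set_pmf (P u)}\<^sup>*)"

text \<open>Law of the path (Z(1), ..., Z(n)) of the Markov chain with kernel P started at x.\<close>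
primrec path_pmf :: "('s \<Rightarrow> 's pmf) \<Rightarrow> nat \<Rightarrow> 's \<Rightarrow> 's list pmf" where
  "path_pmf P 0 x = return_pmf []"
| "path_pmf P (Suc n) x = bind_pmf (P x) (\<lambda>y. map_pmf (Cons y) (path_pmf P n y))"

text \<open>P_x(T \<ge> n) where T = inf {m > 0. Z(m) \<in> A} (inf of empty set = infinity):
  the event T \<ge> n means Z(m) \<notin> A for all 0 < m < n; ys ! (m - 1) = Z(m).\<close>
definition hit_ge_prob :: "('s \<Rightarrow> 's pmf) \<Rightarrow> 's \<Rightarrow> 's set \<Rightarrow> nat \<Rightarrow> real" where
  "hit_ge_prob P x A n =
     measure_pmf.prob (path_pmf P n x) {ys. \<forall>m. 0 < m \<and> m < n \<longrightarrow> ys ! (m - 1) \<notin> A}"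

definition drift1 :: "(int \<times> int) pmf \<Rightarrow> real" where
  "drift1 mu = measure_pmf.expectation mu (\<lambda>(a, b). real_of_int a)"

end

theory Submission
  imports Defs
begin


definition evt :: "('s set) \<Rightarrow> nat \<Rightarrow> 's list set" where
  "evt A n = {ys. \<forall>m. 0 < m \<and> m < n \<longrightarrow> ys ! (m - 1) \<notin> A}"

lemma cons_evt: "(y # zs \<in> evt A (Suc (Suc n))) \<longleftrightarrow> (y \<notin> A \<and> zs \<in> evt A (Suc n))"
proof
  assume h: "y # zs \<in> evt A (Suc (Suc n))"
  have "0 < (1::nat) \<and> 1 < Suc (Suc n)" by simp
  then have "(y # zs) ! (1 - 1) \<notin> A" using h unfolding evt_def by blast
  then have "y \<notin> A" by simp
  moreover have "zs \<in> evt A (Suc n)"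
    unfolding evt_def
  proof (intro CollectI allI impI)
    fix m assume "0 < m \<and> m < Suc n"
    then have "0 < Suc m \<and> Suc m < Suc (Suc n)" by simp
    then have "(y # zs) ! (Suc m - 1) \<notin> A" using h[unfolded evt_def] by blast
    then show "zs ! (m - 1) \<notin> A" using \<open>0 < m \<and> m < Suc n\<close> by (cases m) auto
  qed
  ultimately show "y \<notin> A \<and> zs \<in> evt A (Suc n)" by blast
next
  assume h: "y \<notin> A \<and> zs \<in> evt A (Suc n)"
  show "y # zs \<in> evt A (Suc (Suc n))"
    unfolding evt_def
  proof (intro CollectI allI impI)
    fix m assume m: "0 < m \<and> m < Suc (Suc n)"
    show "(y # zs) ! (m - 1) \<notin> A"
    proof (cases "m = 1")
      case True then show ?thesis using h by simp
    next
      case False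
      then obtain m' where "m = Suc m'" "0 < m'" "m' < Suc n" using m by (cases m) auto
      then have m': "m = Suc m'" "0 < m'" "m' < Suc n" by auto
      have "zs ! (m' - 1) \<notin> A" using h m'(2,3) unfolding evt_def by blast
      moreover have "(y # zs) ! (m - 1) = zs ! (m' - 1)" using m'(1,2) by (cases m') auto
      ultimately show ?thesis by simp
    qed
  qed
qed

lemma path_rec:
  "emeasure (path_pmf P (Suc (Suc n)) x) (evt A (Suc (Suc n))) =
   (\<integral>\<^sup>+ y. indicator (- A) y * emeasure (path_pmf P (Suc n) y) (evt A (Suc n)) \<partial>P x)"
proof -
  have "emeasure (path_pmf P (Suc (Suc n)) x) (evt A (Suc (Suc n))) =
     (\<integral>\<^sup>+ y. emeasure (path_pmf P (Suc n) y) (Cons y -` evt A (Suc (Suc n))) \<partial>P x)"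
    by (simp only: path_pmf.simps emeasure_bind_pmf emeasure_map_pmf)
  also have "\<dots> = (\<integral>\<^sup>+ y. indicator (- A) y * emeasure (path_pmf P (Suc n) y) (evt A (Suc n)) \<partial>P x)"
  proof (rule nn_integral_cong)
    fix y
    show "emeasure (path_pmf P (Suc n) y) (Cons y -` evt A (Suc (Suc n))) =
      indicator (- A) y * emeasure (path_pmf P (Suc n) y) (evt A (Suc n))"
    proof (cases "y \<in> A")
      case True
      then have "Cons y -` evt A (Suc (Suc n)) = {}" using True by (auto simp: cons_evt)
      then show ?thesis using True by simp
    next
      case False
      then have "Cons y -` evt A (Suc (Suc n)) = evt A (Suc n)" using False by (auto simp: cons_evt)
      then show ?thesis using False by simp
    qed
  qed
  finally show ?thesis .
qed

lemma hit_evt: "hit_ge_prob P x A n = measure (path_pmf P n x) (evt A n)"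
  unfolding hit_ge_prob_def evt_def by simp

lemma surv_bound:
  fixes P :: "int \<times> int \<Rightarrow> (int \<times> int) pmf" and L :: int and t \<rho> :: real
  assumes h1: "\<And>y. y \<notin> A \<Longrightarrow> L \<le> fst y"
    and h2: "\<And>y. L \<le> fst y \<Longrightarrow> (\<integral>\<^sup>+ z. ennreal (exp (t * real_of_int (fst z))) \<partial>P y)
                 \<le> ennreal (\<rho> * exp (t * real_of_int (fst y)))"
    and t: "0 \<le> t" and \<rho>: "0 \<le> \<rho>"
  shows "L \<le> fst y \<Longrightarrow> emeasure (path_pmf P (Suc n) y) (evt A (Suc n))
           \<le> ennreal (exp (t * real_of_int (fst y - L)) * \<rho> ^ n)"
proof (induction n arbitrary: y)
  case 0
  have "emeasure (path_pmf P (Suc 0) y) (evt A (Suc 0)) \<le> 1"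
    by (rule measure_pmf.emeasure_le_1)
  also have "1 \<le> ennreal (exp (t * real_of_int (fst y - L)) * \<rho> ^ 0)"
    using 0 t by simp
  finally show ?case .
next
  case (Suc n)
  have "emeasure (path_pmf P (Suc (Suc n)) y) (evt A (Suc (Suc n))) =
   (\<integral>\<^sup>+ z. indicator (- A) z * emeasure (path_pmf P (Suc n) z) (evt A (Suc n)) \<partial>P y)"
    by (rule path_rec)
  also have "\<dots> \<le> (\<integral>\<^sup>+ z. ennreal (\<rho> ^ n * exp (- t * real_of_int L)) * ennreal (exp (t * real_of_int (fst z))) \<partial>P y)"
  proof (rule nn_integral_mono)
    fix z
    show "indicator (- A) z * emeasure (path_pmf P (Suc n) z) (evt A (Suc n)) \<le>
      ennreal (\<rho> ^ n * exp (- t * real_of_int L)) * ennreal (exp (t * real_of_int (fst z)))"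
    proof (cases "z \<in> A")
      case True then show ?thesis by simp
    next
      case False
      then have "emeasure (path_pmf P (Suc n) z) (evt A (Suc n)) \<le> ennreal (exp (t * real_of_int (fst z - L)) * \<rho> ^ n)"
        using Suc.IH h1 by blast
      also have "exp (t * real_of_int (fst z - L)) * \<rho> ^ n = (\<rho> ^ n * exp (- t * real_of_int L)) * exp (t * real_of_int (fst z))"
        by (simp add: algebra_simps flip: exp_add)
      finally show ?thesis using False \<rho> by (simp add: ennreal_mult)
    qed
  qed
  also have "\<dots> = ennreal (\<rho> ^ n * exp (- t * real_of_int L)) * (\<integral>\<^sup>+ z. ennreal (exp (t * real_of_int (fst z))) \<partial>P y)"
    by (rule nn_integral_cmult) simp
  also have "\<dots> \<le> ennreal (\<rho> ^ n * exp (- t * real_of_int L)) * ennreal (\<rho> * exp (t * real_of_int (fst y)))"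
    using h2[OF Suc.prems] by (rule mult_left_mono) simp
  also have "\<dots> = ennreal (exp (t * real_of_int (fst y - L)) * \<rho> ^ Suc n)"
    using \<rho> by (simp add: ennreal_mult[symmetric] algebra_simps flip: exp_add)
  finally show ?case .
qed



lemma exp_quad: "exp (x::real) \<le> 1 + x + x\<^sup>2 * exp (max x 0)"
proof -
  have a: "exp x - 1 \<le> x * exp x"
  proof -
    have "1 - x \<le> exp (- x)" using exp_ge_add_one_self[of "-x"] by simp
    then have "(1 - x) * exp x \<le> exp (-x) * exp x" by (rule mult_right_mono) simp
    then show ?thesis by (simp add: algebra_simps flip: exp_add)
  qed
  have b: "exp x - 1 - x \<le> x * (exp x - 1)" using a by (simp add: algebra_simps)
  show ?thesis
  proof (cases "x \<le> 0")
    case True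
    have "x \<le> exp x - 1" using exp_ge_add_one_self[of x] by linarith
    then have "x * (exp x - 1) \<le> x * x" using True by (simp add: mult_left_mono_neg)
    then show ?thesis using b True by (simp add: power2_eq_square max_def)
  next
    case False
    then have "x * (exp x - 1) \<le> x * (x * exp x)" using a by (simp add: mult_left_mono)
    then show ?thesis using b False by (simp add: power2_eq_square max_def algebra_simps)
  qed
qed

lemma sq_le_exp: "0 \<le> (x::real) \<Longrightarrow> x\<^sup>2 \<le> 2 * exp x"
  using exp_lower_Taylor_quadratic[of x] by simp

lemma rho_lemma:
  fixes p :: "(int \<times> int) pmf" and c d C1 \<theta> :: real
  assumes supp: "\<forall>z\<in>set_pmf p. - c \<le> real_of_int (fst z)"
    and c: "0 \<le> c" and d: "0 < d"
    and mom: "(\<integral>\<^sup>+ z. ennreal (exp (d * real_of_int (fst z))) \<partial>p) \<le> ennreal C1"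
    and drift: "(\<integral>z. real_of_int (fst z) \<partial>p) < 0"
    and \<theta>: "0 < \<theta>"
  shows "\<exists>t>0. t \<le> \<theta> \<and> t \<le> d \<and> (\<exists>\<rho><1. 0 \<le> \<rho> \<and>
           (\<integral>\<^sup>+ z. ennreal (exp (t * real_of_int (fst z))) \<partial>p) \<le> ennreal \<rho>)"
proof -
  define m where "m = (\<integral>z. real_of_int (fst z) \<partial>p)"
  define E where "E = (\<lambda>z::int\<times>int. exp (d * real_of_int (fst z)))"
  define R where "R = (\<lambda>z::int\<times>int. (real_of_int (fst z))\<^sup>2 * exp (d / 2 * max (real_of_int (fst z)) 0))"
  have intE: "integrable p E"
  proof (rule integrableI_bounded)
    show "E \<in> borel_measurable (measure_pmf p)" by simp
    have "(\<integral>\<^sup>+ z. ennreal (norm (E z)) \<partial>p) = (\<integral>\<^sup>+ z. ennreal (exp (d * real_of_int (fst z))) \<partial>p)"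
      unfolding E_def by simp
    also have "\<dots> < \<infinity>" using mom by (simp add: le_less_trans)
    finally show "(\<integral>\<^sup>+ z. ennreal (norm (E z)) \<partial>p) < \<infinity>" .
  qed
  have intfst: "integrable p (\<lambda>z. real_of_int (fst z))"
  proof (rule Bochner_Integration.integrable_bound)
    show "integrable p (\<lambda>z. c + E z / d)" using intE by simp
    show "(\<lambda>z. real_of_int (fst z)) \<in> borel_measurable (measure_pmf p)" by simp
    show "AE z in measure_pmf p. norm (real_of_int (fst z)) \<le> norm (c + E z / d)"
    proof (subst AE_measure_pmf_iff, intro ballI)
      fix z assume z: "z \<in> set_pmf p"
      have "d * real_of_int (fst z) \<le> E z" unfolding E_def using exp_ge_add_one_self[of "d * real_of_int (fst z)"] by linarith
      then have "real_of_int (fst z) \<le> E z / d" using d by (simp add: field_simps)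
      moreover have "0 \<le> E z" unfolding E_def by simp
      moreover have "0 \<le> E z / d" using d unfolding E_def by simp
      moreover have "- c \<le> real_of_int (fst z)" using supp z by blast
      ultimately show "norm (real_of_int (fst z)) \<le> norm (c + E z / d)" using c by (simp add: abs_le_iff)
    qed
  qed
  have intR: "integrable p R"
  proof (rule Bochner_Integration.integrable_bound)
    show "integrable p (\<lambda>z. c\<^sup>2 + 8 / d\<^sup>2 * E z)" using intE by simp
    show "R \<in> borel_measurable (measure_pmf p)" by simp
    show "AE z in measure_pmf p. norm (R z) \<le> norm (c\<^sup>2 + 8 / d\<^sup>2 * E z)"
    proof (subst AE_measure_pmf_iff, intro ballI)
      fix z assume z: "z \<in> set_pmf p"
      define a where "a = real_of_int (fst z)"
      have ge: "- c \<le> a" using supp z a_def by auto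
      have "R z \<le> c\<^sup>2 + 8 / d\<^sup>2 * E z"
      proof (cases "a \<le> 0")
        case True
        then have "R z = a\<^sup>2" unfolding R_def a_def[symmetric] by simp
        also have "\<dots> \<le> c\<^sup>2"
        proof -
          have "\<bar>a\<bar> \<le> \<bar>c\<bar>" using True ge c by linarith
          then show ?thesis by (simp add: abs_le_square_iff)
        qed
        also have "\<dots> \<le> c\<^sup>2 + 8 / d\<^sup>2 * E z" unfolding E_def by simp
        finally show ?thesis .
      next
        case False
        have "(d / 2 * a)\<^sup>2 \<le> 2 * exp (d / 2 * a)" using False d by (intro sq_le_exp) simp
        then have "a\<^sup>2 \<le> 8 / d\<^sup>2 * exp (d / 2 * a)" using d by (simp add: field_simps power2_eq_square)
        then have "a\<^sup>2 * exp (d / 2 * a) \<le> 8 / d\<^sup>2 * exp (d / 2 * a) * exp (d / 2 * a)"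
          by (rule mult_right_mono) simp
        also have "\<dots> = 8 / d\<^sup>2 * E z" unfolding E_def a_def[symmetric] by (simp flip: exp_add)
        finally have "R z \<le> 8 / d\<^sup>2 * E z" unfolding R_def a_def[symmetric] using False by simp
        moreover have "0 \<le> c\<^sup>2" by simp
        ultimately show ?thesis by linarith
      qed
      moreover have "0 \<le> R z" unfolding R_def by simp
      ultimately show "norm (R z) \<le> norm (c\<^sup>2 + 8 / d\<^sup>2 * E z)" by simp
    qed
  qed
  define K where "K = (\<integral>z. R z \<partial>p)"
  have K0: "0 \<le> K" unfolding K_def R_def by (rule integral_nonneg_AE) simp
  have m0: "m < 0" using drift m_def by simp
  define t where "t = min (d / 2) (min \<theta> (- m / (2 * (K + 1))))"
  have t0: "0 < t" unfolding t_def using d \<theta> m0 K0 by (simp add: divide_neg_pos)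
  have td2: "t \<le> d / 2" unfolding t_def by (rule min.cobounded1)
  have tK: "t * K \<le> - m / 2"
  proof -
    have "t \<le> - m / (2 * (K + 1))" unfolding t_def by simp
    then have "t * K \<le> - m / (2 * (K + 1)) * K" using K0 by (rule mult_right_mono)
    also have "\<dots> \<le> - m / 2"
      using K0 m0 by (simp add: field_simps)
    finally show ?thesis .
  qed
  have intexp: "integrable p (\<lambda>z. exp (t * real_of_int (fst z)))"
  proof (rule Bochner_Integration.integrable_bound)
    show "integrable p (\<lambda>z. 1 + E z)" using intE by simp
    show "(\<lambda>z. exp (t * real_of_int (fst z))) \<in> borel_measurable (measure_pmf p)" by simp
    show "AE z in measure_pmf p. norm (exp (t * real_of_int (fst z))) \<le> norm (1 + E z)"
    proof (rule AE_I2)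
      fix z
      show "norm (exp (t * real_of_int (fst z))) \<le> norm (1 + E z)"
      proof (cases "0 \<le> real_of_int (fst z)")
        case True
        then have "t * real_of_int (fst z) \<le> d * real_of_int (fst z)" using td2 d by (intro mult_right_mono) auto
        then have "exp (t * real_of_int (fst z)) \<le> exp (d * real_of_int (fst z))" by simp
        then show ?thesis unfolding E_def by (smt (verit) exp_gt_zero real_norm_def)
      next
        case False
        then have "t * real_of_int (fst z) \<le> 0" using t0 by (intro mult_nonneg_nonpos) auto
        then have "exp (t * real_of_int (fst z)) \<le> 1" by simp
        then show ?thesis unfolding E_def by (smt (verit) exp_gt_zero real_norm_def)
      qed
    qed
  qed
  define \<rho> where "\<rho> = (\<integral>z. exp (t * real_of_int (fst z)) \<partial>p)"
  have "\<rho> \<le> (\<integral>z. 1 + t * real_of_int (fst z) + t\<^sup>2 * R z \<partial>p)"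
    unfolding \<rho>_def
  proof (rule integral_mono_AE)
    show "integrable p (\<lambda>z. exp (t * real_of_int (fst z)))" by (rule intexp)
    show "integrable p (\<lambda>z. 1 + t * real_of_int (fst z) + t\<^sup>2 * R z)" using intfst intR by simp
    show "AE z in measure_pmf p. exp (t * real_of_int (fst z)) \<le> 1 + t * real_of_int (fst z) + t\<^sup>2 * R z"
    proof (rule AE_I2)
      fix z :: "int \<times> int"
      define a where "a = real_of_int (fst z)"
      have "exp (t * a) \<le> 1 + t * a + (t * a)\<^sup>2 * exp (max (t * a) 0)" by (rule exp_quad)
      also have "(t * a)\<^sup>2 * exp (max (t * a) 0) \<le> t\<^sup>2 * (a\<^sup>2 * exp (d / 2 * max a 0))"
      proof -
        have "max (t * a) 0 \<le> d / 2 * max a 0"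
        proof (cases "0 \<le> a")
          case True
          have h: "t * a \<le> d / 2 * a" by (rule mult_right_mono[OF td2 True])
          have "0 \<le> t * a" using t0 True by simp
          then have e1: "max (t * a) 0 = t * a" by (rule max_absorb1)
          have e2: "max a 0 = a" using True by (rule max_absorb1)
          show ?thesis unfolding e1 e2 by (rule h)
        next
          case False
          then have "t * a \<le> 0" using t0 by (intro mult_nonneg_nonpos) auto
          then show ?thesis using False by (simp add: max_def)
        qed
        then have "exp (max (t * a) 0) \<le> exp (d / 2 * max a 0)" by simp
        then have "(t * a)\<^sup>2 * exp (max (t * a) 0) \<le> (t * a)\<^sup>2 * exp (d / 2 * max a 0)"
          by (rule mult_left_mono) simp
        then show ?thesis by (simp add: power_mult_distrib)
      qed
      finally show "exp (t * real_of_int (fst z)) \<le> 1 + t * real_of_int (fst z) + t\<^sup>2 * R z"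
        unfolding R_def a_def by simp
    qed
  qed
  also have "\<dots> = 1 + t * m + t\<^sup>2 * K"
    unfolding m_def K_def using intfst intR by simp
  also have "\<dots> \<le> 1 + t * m / 2"
  proof -
    have "t\<^sup>2 * K = t * (t * K)" by (simp add: power2_eq_square)
    also have "\<dots> \<le> t * (- m / 2)" using tK t0 by (intro mult_left_mono) auto
    finally show ?thesis by linarith
  qed
  finally have \<rho>le: "\<rho> \<le> 1 + t * m / 2" .
  have "t * m < 0" using t0 m0 by (rule mult_pos_neg)
  then have \<rho>1: "\<rho> < 1" using \<rho>le by linarith
  have \<rho>0: "0 \<le> \<rho>" unfolding \<rho>_def by (rule integral_nonneg_AE) simp
  have eq: "(\<integral>\<^sup>+ z. ennreal (exp (t * real_of_int (fst z))) \<partial>p) = ennreal \<rho>"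
    unfolding \<rho>_def by (rule nn_integral_eq_integral[OF intexp]) simp
  have t\<theta>: "t \<le> \<theta>" unfolding t_def by (metis min.cobounded1 min.cobounded2 order_trans)
  have td: "t \<le> d" using td2 d by linarith
  show ?thesis using t0 t\<theta> td \<rho>0 \<rho>1 eq by (intro exI[of _ t] conjI exI[of _ \<rho>]) auto
qed



lemma surv_start:
  fixes P :: "int \<times> int \<Rightarrow> (int \<times> int) pmf" and L :: int and t \<rho> M :: real
  assumes h1: "\<And>y. y \<notin> A \<Longrightarrow> L \<le> fst y"
    and h2: "\<And>y. L \<le> fst y \<Longrightarrow> (\<integral>\<^sup>+ z. ennreal (exp (t * real_of_int (fst z))) \<partial>P y)
                 \<le> ennreal (\<rho> * exp (t * real_of_int (fst y)))"
    and h3: "(\<integral>\<^sup>+ z. ennreal (exp (t * real_of_int (fst z))) \<partial>P x) \<le> ennreal (exp (t * real_of_int (fst x)) * M)"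
    and t: "0 \<le> t" and \<rho>: "0 \<le> \<rho>" and M: "0 \<le> M"
  shows "emeasure (path_pmf P (Suc (Suc n)) x) (evt A (Suc (Suc n)))
           \<le> ennreal (\<rho> ^ n * exp (- t * real_of_int L) * (exp (t * real_of_int (fst x)) * M))"
proof -
  have "emeasure (path_pmf P (Suc (Suc n)) x) (evt A (Suc (Suc n))) =
   (\<integral>\<^sup>+ z. indicator (- A) z * emeasure (path_pmf P (Suc n) z) (evt A (Suc n)) \<partial>P x)"
    by (rule path_rec)
  also have "\<dots> \<le> (\<integral>\<^sup>+ z. ennreal (\<rho> ^ n * exp (- t * real_of_int L)) * ennreal (exp (t * real_of_int (fst z))) \<partial>P x)"
  proof (rule nn_integral_mono)
    fix z
    show "indicator (- A) z * emeasure (path_pmf P (Suc n) z) (evt A (Suc n)) \<le>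
      ennreal (\<rho> ^ n * exp (- t * real_of_int L)) * ennreal (exp (t * real_of_int (fst z)))"
    proof (cases "z \<in> A")
      case True then show ?thesis by simp
    next
      case False
      then have "emeasure (path_pmf P (Suc n) z) (evt A (Suc n)) \<le> ennreal (exp (t * real_of_int (fst z - L)) * \<rho> ^ n)"
        using surv_bound[OF h1 h2 t \<rho>] h1 by blast
      also have "exp (t * real_of_int (fst z - L)) * \<rho> ^ n = (\<rho> ^ n * exp (- t * real_of_int L)) * exp (t * real_of_int (fst z))"
        by (simp add: algebra_simps flip: exp_add)
      finally show ?thesis using False \<rho> by (simp add: ennreal_mult)
    qed
  qed
  also have "\<dots> = ennreal (\<rho> ^ n * exp (- t * real_of_int L)) * (\<integral>\<^sup>+ z. ennreal (exp (t * real_of_int (fst z))) \<partial>P x)"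
    by (rule nn_integral_cmult) simp
  also have "\<dots> \<le> ennreal (\<rho> ^ n * exp (- t * real_of_int L)) * ennreal (exp (t * real_of_int (fst x)) * M)"
    using h3 by (rule mult_left_mono) simp
  also have "\<dots> = ennreal (\<rho> ^ n * exp (- t * real_of_int L) * (exp (t * real_of_int (fst x)) * M))"
    using \<rho> M by (intro ennreal_mult[symmetric]) auto
  finally show ?thesis .
qed

lemma shift_int:
  "(\<integral>\<^sup>+ z. ennreal (exp (t * real_of_int (fst z))) \<partial>shift_pmf y q) =
   ennreal (exp (t * real_of_int (fst y))) * (\<integral>\<^sup>+ w. ennreal (exp (t * real_of_int (fst w))) \<partial>q)"
proof -
  have "(\<integral>\<^sup>+ z. ennreal (exp (t * real_of_int (fst z))) \<partial>shift_pmf y q) =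
        (\<integral>\<^sup>+ w. ennreal (exp (t * real_of_int (fst y))) * ennreal (exp (t * real_of_int (fst w))) \<partial>q)"
    unfolding shift_pmf_def nn_integral_map_pmf
    by (intro nn_integral_cong) (simp add: case_prod_unfold distrib_left exp_add ennreal_mult)
  also have "\<dots> = ennreal (exp (t * real_of_int (fst y))) * (\<integral>\<^sup>+ w. ennreal (exp (t * real_of_int (fst w))) \<partial>q)"
    by (rule nn_integral_cmult) simp
  finally show ?thesis .
qed

lemma mom_extract:
  fixes q :: "(int \<times> int) pmf" and c :: int and i j :: int and \<delta> \<gamma> C :: real
  assumes supp: "\<forall>z\<in>set_pmf q. - c \<le> snd z" and \<gamma>: "0 < \<gamma>" and C: "0 \<le> C"
    and h: "(\<integral>\<^sup>+ z. ennreal (exp (\<delta> * real_of_int (fst z - i) + \<gamma> * real_of_int (snd z - j))) \<partial>measure_pmf (shift_pmf (i, j) q)) \<le> ennreal C"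
  shows "(\<integral>\<^sup>+ z. ennreal (exp (\<delta> * real_of_int (fst z))) \<partial>q) \<le> ennreal (C * exp (\<gamma> * real_of_int c))"
proof -
  have "(\<integral>\<^sup>+ z. ennreal (exp (\<delta> * real_of_int (fst z))) \<partial>q) \<le>
        (\<integral>\<^sup>+ z. ennreal (exp (\<delta> * real_of_int (fst z) + \<gamma> * real_of_int (snd z))) * ennreal (exp (\<gamma> * real_of_int c)) \<partial>q)"
  proof (rule nn_integral_mono_AE)
    show "AE z in measure_pmf q. ennreal (exp (\<delta> * real_of_int (fst z))) \<le>
        ennreal (exp (\<delta> * real_of_int (fst z) + \<gamma> * real_of_int (snd z))) * ennreal (exp (\<gamma> * real_of_int c))"
    proof (subst AE_measure_pmf_iff, intro ballI)
      fix z assume z: "z \<in> set_pmf q"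
      have "- c \<le> snd z" using supp z by blast
      then have "0 \<le> snd z + c" by linarith
      then have "0 \<le> real_of_int (snd z) + real_of_int c" by linarith
      then have "0 \<le> \<gamma> * (real_of_int (snd z) + real_of_int c)" using \<gamma> by simp
      then have "0 \<le> \<gamma> * real_of_int (snd z) + \<gamma> * real_of_int c"
        by (simp add: distrib_left)
      then have "exp (\<delta> * real_of_int (fst z)) \<le> exp (\<delta> * real_of_int (fst z) + \<gamma> * real_of_int (snd z) + \<gamma> * real_of_int c)"
        by simp
      then show "ennreal (exp (\<delta> * real_of_int (fst z))) \<le>
        ennreal (exp (\<delta> * real_of_int (fst z) + \<gamma> * real_of_int (snd z))) * ennreal (exp (\<gamma> * real_of_int c))"
        by (simp add: ennreal_mult[symmetric] exp_add[symmetric] add.assoc)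
    qed
  qed
  also have "\<dots> = (\<integral>\<^sup>+ z. ennreal (exp (\<delta> * real_of_int (fst z) + \<gamma> * real_of_int (snd z))) \<partial>q) * ennreal (exp (\<gamma> * real_of_int c))"
    by (rule nn_integral_multc) simp
  also have "(\<integral>\<^sup>+ z. ennreal (exp (\<delta> * real_of_int (fst z) + \<gamma> * real_of_int (snd z))) \<partial>q) =
      (\<integral>\<^sup>+ z. ennreal (exp (\<delta> * real_of_int (fst z - i) + \<gamma> * real_of_int (snd z - j))) \<partial>measure_pmf (shift_pmf (i, j) q))"
    unfolding shift_pmf_def nn_integral_map_pmf by (simp add: case_prod_unfold)
  also have "\<dots> * ennreal (exp (\<gamma> * real_of_int c)) \<le> ennreal C * ennreal (exp (\<gamma> * real_of_int c))"
    using h by (rule mult_right_mono) simp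
  also have "\<dots> = ennreal (C * exp (\<gamma> * real_of_int c))" using C by (intro ennreal_mult[symmetric]) auto
  finally show ?thesis .
qed

lemma M_bound:
  fixes q :: "(int \<times> int) pmf" and t d C1 :: real
  assumes "0 < t" "t \<le> d" and mom: "(\<integral>\<^sup>+ z. ennreal (exp (d * real_of_int (fst z))) \<partial>q) \<le> ennreal C1"
    and "0 \<le> C1"
  shows "(\<integral>\<^sup>+ z. ennreal (exp (t * real_of_int (fst z))) \<partial>q) \<le> ennreal (1 + C1)"
proof -
  have "(\<integral>\<^sup>+ z. ennreal (exp (t * real_of_int (fst z))) \<partial>q) \<le> (\<integral>\<^sup>+ z. 1 + ennreal (exp (d * real_of_int (fst z))) \<partial>q)"
  proof (rule nn_integral_mono)
    fix z :: "int \<times> int"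
    have "exp (t * real_of_int (fst z)) \<le> 1 + exp (d * real_of_int (fst z))"
    proof (cases "0 \<le> real_of_int (fst z)")
      case True
      then have "t * real_of_int (fst z) \<le> d * real_of_int (fst z)" using assms by (intro mult_right_mono) auto
      then have "exp (t * real_of_int (fst z)) \<le> exp (d * real_of_int (fst z))" by simp
      then show ?thesis by (smt (verit) exp_gt_zero)
    next
      case False
      then have "t * real_of_int (fst z) \<le> 0" using assms by (intro mult_nonneg_nonpos) auto
      then have "exp (t * real_of_int (fst z)) \<le> 1" by simp
      then show ?thesis by (smt (verit) exp_gt_zero)
    qed
    then have "ennreal (exp (t * real_of_int (fst z))) \<le> ennreal (1 + exp (d * real_of_int (fst z)))"
      by (rule ennreal_leI)
    also have "\<dots> = 1 + ennreal (exp (d * real_of_int (fst z)))"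
      by (subst ennreal_plus) auto
    finally show "ennreal (exp (t * real_of_int (fst z))) \<le> 1 + ennreal (exp (d * real_of_int (fst z)))" .
  qed
  also have "\<dots> = (\<integral>\<^sup>+ z. 1 \<partial>q) + (\<integral>\<^sup>+ z. ennreal (exp (d * real_of_int (fst z))) \<partial>q)"
    by (rule nn_integral_add) auto
  also have "\<dots> \<le> 1 + ennreal C1" using mom by (simp add: add_left_mono)
  also have "\<dots> = ennreal (1 + C1)" using assms by (simp add: ennreal_plus)
  finally show ?thesis .
qed



theorem lemma5p2:
  fixes k0 :: nat
    and mu :: "(int \<times> int) pmf"
    and mu' :: "nat \<Rightarrow> (int \<times> int) pmf"
    and mu'' :: "nat \<Rightarrow> (int \<times> int) pmf"
    and mu2 :: "nat \<Rightarrow> nat \<Rightarrow> (int \<times> int) pmf"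
  assumes k0: "1 \<le> k0"
    and A1_mu: "\<forall>(a, b)\<in>set_pmf mu. - int k0 \<le> a \<and> - int k0 \<le> b"
    and A1_mu': "\<forall>j<k0. \<forall>(a, b)\<in>set_pmf (mu' j). - int k0 \<le> a \<and> - int j \<le> b"
    and A1_mu'': "\<forall>i<k0. \<forall>(a, b)\<in>set_pmf (mu'' i). - int i \<le> a \<and> - int k0 \<le> b"
    and A1_mu2: "\<forall>i<k0. \<forall>j<k0. \<forall>(a, b)\<in>set_pmf (mu2 i j). - int i \<le> a \<and> - int j \<le> b"
    and A2: "\<exists>\<delta>>0. \<exists>\<gamma>>0. \<exists>C>0. \<forall>i j. 0 \<le> i \<longrightarrow> 0 \<le> j \<longrightarrow>
              (\<integral>\<^sup>+ z. ennreal (exp (\<delta> * real_of_int (fst z - i) + \<gamma> * real_of_int (snd z - j)))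
                 \<partial>measure_pmf (stepZ k0 mu mu' mu'' mu2 (i, j))) \<le> ennreal C"
    and A3_Z0: "irreducible_on UNIV (stepZ0 mu)"
    and A3_Z1: "irreducible_on {x. 0 \<le> fst x} (stepZ1 k0 mu mu'')"
    and A3_Z2: "irreducible_on {x. 0 \<le> snd x} (stepZ2 k0 mu mu')"
    and A3_Z: "irreducible_on {x. 0 \<le> fst x \<and> 0 \<le> snd x} (stepZ k0 mu mu' mu'' mu2)"
    and m1_neg: "drift1 mu < 0"
  shows "\<forall>\<theta>>0. \<exists>C>0. \<exists>\<delta>>0. \<forall>(i::int) (j::int) (k::nat) (n::nat). 0 \<le> i \<longrightarrow>
           hit_ge_prob (stepZ1 k0 mu mu'') (i, j) {x. fst x \<le> int (max (k0 - 1) k)} n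
             \<le> C * exp (\<theta> * real_of_int i - \<delta> * real n)"
proof (intro allI impI)
  fix \<theta> :: real assume \<theta>: "0 < \<theta>"
  obtain d \<gamma> C0 where d: "0 < d" and \<gamma>: "0 < \<gamma>" and C0: "0 < C0" and A2': "\<forall>i j. 0 \<le> i \<longrightarrow> 0 \<le> j \<longrightarrow>
              (\<integral>\<^sup>+ z. ennreal (exp (d * real_of_int (fst z - i) + \<gamma> * real_of_int (snd z - j)))
                 \<partial>measure_pmf (stepZ k0 mu mu' mu'' mu2 (i, j))) \<le> ennreal C0"
    using A2 by blast
  define C1 where "C1 = C0 * exp (\<gamma> * real_of_int (int k0))"
  have C1: "0 \<le> C1" using C0 by (simp add: C1_def)
  have step_mu: "stepZ k0 mu mu' mu'' mu2 (int k0, int k0) = shift_pmf (int k0, int k0) mu"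
    by (simp add: stepZ_def)
  have mom_mu: "(\<integral>\<^sup>+ z. ennreal (exp (d * real_of_int (fst z))) \<partial>mu) \<le> ennreal C1"
    unfolding C1_def
  proof (rule mom_extract[where i="int k0" and j="int k0"])
    show "\<forall>z\<in>set_pmf mu. - int k0 \<le> snd z" using A1_mu by auto
    show "0 < \<gamma>" by (rule \<gamma>)
    show "0 \<le> C0" using C0 by simp
    show "(\<integral>\<^sup>+ z. ennreal (exp (d * real_of_int (fst z - int k0) + \<gamma> * real_of_int (snd z - int k0)))
        \<partial>measure_pmf (shift_pmf (int k0, int k0) mu)) \<le> ennreal C0"
      using A2'[rule_format, of "int k0" "int k0"] step_mu by simp
  qed
  have mom_mu'': "(\<integral>\<^sup>+ z. ennreal (exp (d * real_of_int (fst z))) \<partial>mu'' i) \<le> ennreal C1" if i: "i < k0" for i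
    unfolding C1_def
  proof (rule mom_extract[where i="int i" and j="int k0"])
    have "\<forall>(a, b)\<in>set_pmf (mu'' i). - int i \<le> a \<and> - int k0 \<le> b" using A1_mu'' i by blast
    then show "\<forall>z\<in>set_pmf (mu'' i). - int k0 \<le> snd z" by auto
    show "0 < \<gamma>" by (rule \<gamma>)
    show "0 \<le> C0" using C0 by simp
    have "stepZ k0 mu mu' mu'' mu2 (int i, int k0) = shift_pmf (int i, int k0) (mu'' i)"
      using i by (simp add: stepZ_def)
    then show "(\<integral>\<^sup>+ z. ennreal (exp (d * real_of_int (fst z - int i) + \<gamma> * real_of_int (snd z - int k0)))
        \<partial>measure_pmf (shift_pmf (int i, int k0) (mu'' i))) \<le> ennreal C0"
      using A2'[rule_format, of "int i" "int k0"] by simp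
  qed
  have drift: "(\<integral>z. real_of_int (fst z) \<partial>mu) < 0"
    using m1_neg unfolding drift1_def by (simp add: case_prod_unfold)
  have supp: "\<forall>z\<in>set_pmf mu. - real k0 \<le> real_of_int (fst z)"
    using A1_mu by force
  obtain t \<rho> where t0: "0 < t" and t\<theta>: "t \<le> \<theta>" and td: "t \<le> d" and \<rho>1: "\<rho> < 1" and \<rho>0: "0 \<le> \<rho>"
    and int_mu: "(\<integral>\<^sup>+ z. ennreal (exp (t * real_of_int (fst z))) \<partial>mu) \<le> ennreal \<rho>"
    using rho_lemma[OF supp _ d mom_mu drift \<theta>] by auto
  define M where "M = 1 + C1"
  have M1: "1 \<le> M" using C1 by (simp add: M_def)
  have int_mu'': "(\<integral>\<^sup>+ z. ennreal (exp (t * real_of_int (fst z))) \<partial>mu'' i) \<le> ennreal M" if "i < k0" for i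
    unfolding M_def using t0 td mom_mu''[OF that] C1 by (rule M_bound)
  have int_mu_M: "(\<integral>\<^sup>+ z. ennreal (exp (t * real_of_int (fst z))) \<partial>mu) \<le> ennreal M"
    using int_mu \<rho>1 M1 by (meson ennreal_leI less_le_not_le order.trans)
  define \<rho>1 where "\<rho>1 = max \<rho> (1/2)"
  have r1pos: "0 < \<rho>1" and r1lt: "\<rho>1 < 1" and r1ge: "\<rho> \<le> \<rho>1" using \<rho>1 by (auto simp: \<rho>1_def)
  define \<delta> where "\<delta> = - ln \<rho>1"
  have \<delta>0: "0 < \<delta>" using r1pos r1lt by (simp add: \<delta>_def)
  have r1exp: "\<rho>1 = exp (- \<delta>)" using r1pos by (simp add: \<delta>_def)
  define C where "C = M * exp (2 * \<delta>)"
  have Cpos: "0 < C" using M1 by (simp add: C_def)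
  show "\<exists>C>0. \<exists>\<delta>>0. \<forall>(i::int) (j::int) (k::nat) (n::nat). 0 \<le> i \<longrightarrow>
           hit_ge_prob (stepZ1 k0 mu mu'') (i, j) {x. fst x \<le> int (max (k0 - 1) k)} n
             \<le> C * exp (\<theta> * real_of_int i - \<delta> * real n)"
  proof (rule exI[of _ C], rule conjI[OF Cpos], rule exI[of _ \<delta>], rule conjI[OF \<delta>0], intro allI impI)
    fix i j :: int and k n :: nat assume i: "0 \<le> i"
    define A where "A = {x::int \<times> int. fst x \<le> int (max (k0 - 1) k)}"
    define P where "P = stepZ1 k0 mu mu''"
    have h1: "int k0 \<le> fst y" if "y \<notin> A" for y
    proof -
      have "int (k0 - 1) \<le> int (max (k0 - 1) k)" by simp
      moreover have "int (k0 - 1) = int k0 - 1" using k0 by simp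
      moreover have "int (max (k0 - 1) k) < fst y" using that by (simp add: A_def)
      ultimately show ?thesis by linarith
    qed
    have h2: "(\<integral>\<^sup>+ z. ennreal (exp (t * real_of_int (fst z))) \<partial>P y)
                 \<le> ennreal (\<rho> * exp (t * real_of_int (fst y)))" if "int k0 \<le> fst y" for y
    proof -
      have "P y = shift_pmf y mu" using that by (simp add: P_def stepZ1_def)
      then have "(\<integral>\<^sup>+ z. ennreal (exp (t * real_of_int (fst z))) \<partial>P y) =
         ennreal (exp (t * real_of_int (fst y))) * (\<integral>\<^sup>+ w. ennreal (exp (t * real_of_int (fst w))) \<partial>mu)"
        by (simp add: shift_int)
      also have "\<dots> \<le> ennreal (exp (t * real_of_int (fst y))) * ennreal \<rho>"
        using int_mu by (rule mult_left_mono) simp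
      also have "\<dots> = ennreal (\<rho> * exp (t * real_of_int (fst y)))"
        using \<rho>0 by (simp add: ennreal_mult[symmetric] mult.commute)
      finally show ?thesis .
    qed
    have h3: "(\<integral>\<^sup>+ z. ennreal (exp (t * real_of_int (fst z))) \<partial>P (i, j))
        \<le> ennreal (exp (t * real_of_int (fst (i, j))) * M)"
    proof -
      define q where "q = (if int k0 \<le> i then mu else mu'' (nat i))"
      have q: "(\<integral>\<^sup>+ z. ennreal (exp (t * real_of_int (fst z))) \<partial>q) \<le> ennreal M"
      proof (cases "int k0 \<le> i")
        case True then show ?thesis using int_mu_M by (simp add: q_def)
      next
        case False
        then have "nat i < k0" using i by linarith
        then show ?thesis using False int_mu'' by (simp add: q_def)
      qed
      have "P (i, j) = shift_pmf (i, j) q" by (simp add: P_def stepZ1_def q_def)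
      then have "(\<integral>\<^sup>+ z. ennreal (exp (t * real_of_int (fst z))) \<partial>P (i, j)) =
         ennreal (exp (t * real_of_int i)) * (\<integral>\<^sup>+ w. ennreal (exp (t * real_of_int (fst w))) \<partial>q)"
        by (simp add: shift_int)
      also have "\<dots> \<le> ennreal (exp (t * real_of_int i)) * ennreal M"
        using q by (rule mult_left_mono) simp
      also have "\<dots> = ennreal (exp (t * real_of_int (fst (i, j))) * M)"
        using M1 by (simp add: ennreal_mult[symmetric])
      finally show ?thesis .
    qed
    have Ebig: "exp (\<theta> * real_of_int i) \<ge> 1" using \<theta> i by simp
    have main: "hit_ge_prob P (i, j) A n \<le> C * exp (\<theta> * real_of_int i - \<delta> * real n)"
      unfolding hit_evt
    proof (cases "n < 2")
      case True
      have "measure (path_pmf P n (i, j)) (evt A n) \<le> 1" by (rule measure_pmf.prob_le_1)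
      also have "1 \<le> C * exp (\<theta> * real_of_int i - \<delta> * real n)"
      proof -
        have "real n \<le> 2" using True by simp
        then have "\<delta> * real n \<le> 2 * \<delta>" using \<delta>0 by (simp add: mult.commute mult_left_mono)
        then have "exp (- (2 * \<delta>)) \<le> exp (- \<delta> * real n)" by simp
        also have "\<dots> \<le> exp (\<theta> * real_of_int i) * exp (- \<delta> * real n)"
          using Ebig by simp
        finally have "exp (- (2 * \<delta>)) \<le> exp (\<theta> * real_of_int i - \<delta> * real n)"
          by (simp add: exp_add[symmetric])
        then have "exp (2 * \<delta>) * exp (- (2 * \<delta>)) \<le> exp (2 * \<delta>) * exp (\<theta> * real_of_int i - \<delta> * real n)"
          by (rule mult_left_mono) simp
        then have "1 \<le> exp (2 * \<delta>) * exp (\<theta> * real_of_int i - \<delta> * real n)"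
          by (simp add: exp_add[symmetric])
        also have "\<dots> \<le> C * exp (\<theta> * real_of_int i - \<delta> * real n)"
          unfolding C_def using M1 by (intro mult_right_mono) (auto simp: mult_le_cancel_right1)
        finally show ?thesis .
      qed
      finally show "measure (path_pmf P n (i, j)) (evt A n) \<le> C * exp (\<theta> * real_of_int i - \<delta> * real n)" .
    next
      case False
      then obtain m where n: "n = Suc (Suc m)" by (metis add_2_eq_Suc le_add_diff_inverse not_less)
      define B where "B = \<rho> ^ m * exp (- t * real_of_int (int k0)) * (exp (t * real_of_int (fst (i, j))) * M)"
      have B0: "0 \<le> B" unfolding B_def using \<rho>0 M1 by simp
      have "emeasure (path_pmf P (Suc (Suc m)) (i, j)) (evt A (Suc (Suc m))) \<le> ennreal B"
        unfolding B_def
        by (rule surv_start[OF h1 h2 h3]) (use t0 \<rho>0 M1 in auto)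
      then have mB: "measure (path_pmf P n (i, j)) (evt A n) \<le> B"
        using B0 n by (simp add: measure_pmf.emeasure_eq_measure)
      have "B \<le> \<rho>1 ^ m * 1 * (exp (\<theta> * real_of_int i) * M)"
        unfolding B_def
      proof (intro mult_mono)
        show "\<rho> ^ m \<le> \<rho>1 ^ m" using r1ge \<rho>0 by (rule power_mono)
        show "exp (- t * real_of_int (int k0)) \<le> 1" using t0 by simp
        show "exp (t * real_of_int (fst (i, j))) \<le> exp (\<theta> * real_of_int i)"
          using t\<theta> i by (simp add: mult_right_mono)
      qed (use \<rho>0 r1pos M1 in auto)
      also have "\<rho>1 ^ m * 1 * (exp (\<theta> * real_of_int i) * M) = C * exp (\<theta> * real_of_int i - \<delta> * real n)"
      proof -
        have "\<rho>1 ^ m = exp (- \<delta> * real m)" unfolding r1exp by (simp add: exp_of_nat_mult[symmetric] mult.commute)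
        then show ?thesis unfolding C_def n
          by (simp add: algebra_simps flip: exp_add exp_diff)
      qed
      finally show "measure (path_pmf P n (i, j)) (evt A n) \<le> C * exp (\<theta> * real_of_int i - \<delta> * real n)"
        using mB by linarith
    qed
    then show "hit_ge_prob (stepZ1 k0 mu mu'') (i, j) {x. fst x \<le> int (max (k0 - 1) k)} n
             \<le> C * exp (\<theta> * real_of_int i - \<delta> * real n)" by (simp only: P_def A_def)
  qed
qed


end
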